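(* Let $X$ be a time-homogeneous Markov chain on $\mathbf{R}$ with transition kernel $P$, initial distribution $\mu_0$ and renewal measure $U=\sum_{n\ge0}\mu_0P^n$, such that $\sup_{y\in\mathbf{R}}\sum_{n\ge0}P^n(y,(k,k+1])<\infty$ for every $k\in\mathbf{Z}$. Assume that $\xi(x)\Rightarrow\xi$ as $x\to\infty$, where $\xi$ has distribution $F$; that there is $\eta$ with $\mathbf{E}\eta<\infty$ and $|\xi(x)|\le_{\rm st}\eta$ for all $x$; and that $\sup_{k\in\mathbf{Z}}U(k,k+1]<\infty$. Let $t_n\to\infty$ be a sequence such that the measures $U(t_n+\cdot)$ converge vaguely to a measure $\lambda$ on $\mathbf{R}$ (i.e. $\int f(x)\,U(t_n+dx)\to\int f\,d\lambda$ for every continuous compactly supported $f$). Then $\lambda=\lambda*F$.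
   Context: $\xi(x)$ denotes a random variable with $\mathbf{P}\{x+\xi(x)\in B\}=P(x,B)$; $\mu_0$ is the law of $X_0$; $U(t+B)$ means $U(\{t+b:b\in B\})$. $|\xi(x)|\le_{\rm st}\eta$ means $\mathbf{P}\{|\xi(x)|>t\}\le\mathbf{P}\{\eta>t\}$ for all $t$. $(\lambda*F)(B)=\int F(B-y)\,\lambda(dy)$. *)

theory Defs
  imports "HOL-Probability.Probability"
begin

primrec kpow :: "(real \<Rightarrow> real measure) \<Rightarrow> nat \<Rightarrow> real \<Rightarrow> real measure" where
  "kpow P 0 x = return borel x"
| "kpow P (Suc n) x = P x \<bind> (\<lambda>y. kpow P n y)"

definition law_at :: "real measure \<Rightarrow> (real \<Rightarrow> real measure) \<Rightarrow> nat \<Rightarrow> real measure" where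
  "law_at mu0 P n = mu0 \<bind> (\<lambda>x. kpow P n x)"

definition renewal :: "real measure \<Rightarrow> (real \<Rightarrow> real measure) \<Rightarrow> real measure" where
  "renewal mu0 P = measure_of UNIV (sets borel) (\<lambda>B. \<Sum>n. emeasure (law_at mu0 P n) B)"

text \<open>shifted measure U(t + .): B \<mapsto> U({t+b : b in B})\<close>
definition shift_measure :: "real measure \<Rightarrow> real \<Rightarrow> real measure" where
  "shift_measure U t = distr U borel (\<lambda>x. x - t)"

definition conv_meas :: "real measure \<Rightarrow> real measure \<Rightarrow> real set \<Rightarrow> ennreal" where
  "conv_meas lam F B = (\<integral>\<^sup>+ y. emeasure F ((\<lambda>b. b - y) ` B) \<partial>lam)"

end

theory Submission
  imports Defs
begin

locale mc =
  fixes P :: "real \<Rightarrow> real measure" and mu0 :: "real measure"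
  assumes kernel: "P \<in> borel \<rightarrow>\<^sub>M prob_algebra borel"
    and init: "prob_space mu0" "sets mu0 = sets borel"
begin

lemma Psub: "P \<in> borel \<rightarrow>\<^sub>M subprob_algebra borel"
  using kernel by (rule measurable_prob_algebraD)

lemma sets_P[simp]: "sets (P x) = sets borel"
  using Psub by (rule sets_kernel) simp

lemma prob_P: "prob_space (P x)"
  using measurable_space[OF kernel, of x] by (simp add: space_prob_algebra)

lemma kpow_meas: "kpow P n \<in> borel \<rightarrow>\<^sub>M subprob_algebra borel"
proof (induction n)
  case 0 then show ?case using return_measurable by simp
next
  case (Suc n) then show ?case
    using measurable_bind2[OF Psub Suc] by simp
qed

lemma sets_kpow[simp]: "sets (kpow P n x) = sets borel"
  using kpow_meas by (rule sets_kernel) simp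

lemma kpow_Suc': "kpow P (Suc n) x = kpow P n x \<bind> P"
proof (induction n arbitrary: x)
  case 0
  have "P x \<bind> return borel = P x" by (rule bind_return'') simp
  moreover have "return borel x \<bind> P = P x" by (rule bind_return[OF Psub]) simp
  ultimately show ?case by simp
next
  case (Suc n)
  have "kpow P (Suc (Suc n)) x = P x \<bind> (\<lambda>y. kpow P (Suc n) y)" by simp
  also have "\<dots> = P x \<bind> (\<lambda>y. kpow P n y \<bind> P)" using Suc by simp
  also have "\<dots> = (P x \<bind> kpow P n) \<bind> P"
    by (rule bind_assoc[symmetric, where N=borel and R=borel])
       (auto intro: kpow_meas Psub simp: measurable_cong_sets[OF sets_P refl])
  finally show ?case by simp
qed

lemma law_meas_sub: "kpow P n \<in> mu0 \<rightarrow>\<^sub>M subprob_algebra borel"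
  using kpow_meas measurable_cong_sets init(2) by blast

lemma space_mu0: "space mu0 \<noteq> {}"
  using sets_eq_imp_space_eq[OF init(2)] by simp

lemma sets_law[simp]: "sets (law_at mu0 P n) = sets borel"
  unfolding law_at_def by (rule sets_bind) (auto simp: space_mu0)

lemma kpow_prob: "kpow P n \<in> borel \<rightarrow>\<^sub>M prob_algebra borel"
proof (induction n)
  case 0 then show ?case using measurable_return_prob_space by simp
next
  case (Suc n) then show ?case
    using measurable_bind_prob_space[OF kernel Suc] by simp
qed

lemma mu0_space: "mu0 \<in> space (prob_algebra borel)"
  using init by (simp add: space_prob_algebra)

lemma prob_law: "prob_space (law_at mu0 P n)"
  unfolding law_at_def by (rule prob_space_bind'[OF mu0_space kpow_prob])

lemma law_0: "law_at mu0 P 0 = mu0"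
  unfolding law_at_def by (simp add: bind_return'' init kpow.simps(1)[abs_def] del: kpow.simps)

lemma law_Suc: "law_at mu0 P (Suc n) = law_at mu0 P n \<bind> P"
  unfolding law_at_def kpow_Suc'
  by (rule bind_assoc[symmetric, where N=borel and R=borel]) (auto intro: law_meas_sub Psub)

definition "V = count_space UNIV \<bind> (\<lambda>n. law_at mu0 P n)"

lemma law_kernel: "(\<lambda>n. law_at mu0 P n) \<in> count_space UNIV \<rightarrow>\<^sub>M subprob_algebra borel"
  by (auto simp: space_subprob_algebra prob_law prob_space_imp_subprob_space)

lemma sets_V[simp]: "sets V = sets borel"
  unfolding V_def by (rule sets_bind) auto

lemma emeasure_V: "B \<in> sets borel \<Longrightarrow> emeasure V B = (\<Sum>n. emeasure (law_at mu0 P n) B)"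
  unfolding V_def by (simp add: emeasure_bind[OF _ law_kernel] nn_integral_count_space_nat)

lemma renewal_V: "renewal mu0 P = V"
proof -
  have "renewal mu0 P = measure_of UNIV (sets borel) (emeasure V)"
    unfolding renewal_def by (rule measure_of_eq) (auto simp: emeasure_V sets.sigma_sets_eq[of borel, simplified])
  also have "\<dots> = V"
    using measure_of_of_measure[of V] sets_eq_imp_space_eq[OF sets_V] by simp
  finally show ?thesis .
qed

lemma sets_U[simp]: "sets (renewal mu0 P) = sets borel"
  by (simp add: renewal_V)

lemma space_U[simp]: "space (renewal mu0 P) = UNIV"
  using sets_eq_imp_space_eq[OF sets_U] by simp

lemma nn_integral_U: "f \<in> borel_measurable borel \<Longrightarrow>
   (\<integral>\<^sup>+x. f x \<partial>renewal mu0 P) = (\<Sum>n. \<integral>\<^sup>+x. f x \<partial>law_at mu0 P n)"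
  unfolding renewal_V V_def by (simp add: nn_integral_bind[OF _ law_kernel] nn_integral_count_space_nat)

lemma ennreal_sum_head: "(\<Sum>n. (f n::ennreal)) = f 0 + (\<Sum>n. f (Suc n))"
  using sums_unique[OF sums_Suc[OF summable_sums[OF summableI[of "\<lambda>n. f (Suc n)"]]]]
  by (simp add: add.commute)

lemma renewal_eq: assumes f: "f \<in> borel_measurable borel"
  shows "(\<integral>\<^sup>+x. f x \<partial>renewal mu0 P) = (\<integral>\<^sup>+x. f x \<partial>mu0) + (\<integral>\<^sup>+y. (\<integral>\<^sup>+x. f x \<partial>P y) \<partial>renewal mu0 P)"
proof -
  have m: "(\<lambda>y. \<integral>\<^sup>+x. f x \<partial>P y) \<in> borel_measurable borel"
    using measurable_compose[OF Psub nn_integral_measurable_subprob_algebra[OF f]] .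
  have "(\<integral>\<^sup>+x. f x \<partial>renewal mu0 P) = (\<Sum>n. \<integral>\<^sup>+x. f x \<partial>law_at mu0 P n)"
    by (rule nn_integral_U[OF f])
  also have "\<dots> = (\<integral>\<^sup>+x. f x \<partial>law_at mu0 P 0) + (\<Sum>n. \<integral>\<^sup>+x. f x \<partial>law_at mu0 P (Suc n))"
    by (rule ennreal_sum_head)
  also have "(\<lambda>n. \<integral>\<^sup>+x. f x \<partial>law_at mu0 P (Suc n)) = (\<lambda>n. \<integral>\<^sup>+y. (\<integral>\<^sup>+x. f x \<partial>P y) \<partial>law_at mu0 P n)"
    unfolding law_Suc
    by (intro ext nn_integral_bind[OF f]) (auto simp: measurable_cong_sets[OF sets_law refl] Psub)
  also have "(\<Sum>n. \<integral>\<^sup>+y. (\<integral>\<^sup>+x. f x \<partial>P y) \<partial>law_at mu0 P n) = (\<integral>\<^sup>+y. (\<integral>\<^sup>+x. f x \<partial>P y) \<partial>renewal mu0 P)"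
    by (rule nn_integral_U[OF m, symmetric])
  finally show ?thesis by (simp add: law_0)
qed

end


lemma unit_to_real:
  fixes N :: "real measure"
  assumes N: "sets N = sets borel" and C: "\<And>k::int. emeasure N {real_of_int k<..real_of_int k + 1} \<le> C"
  shows "emeasure N {a..a+1} \<le> 3 * C"
proof -
  define k where "k = \<lfloor>a\<rfloor>"
  have sub: "{a..a+1} \<subseteq> ({real_of_int (k-1)<..real_of_int (k-1) + 1} \<union> {real_of_int k<..real_of_int k + 1}) \<union> {real_of_int (k+1)<..real_of_int (k+1) + 1}"
    unfolding k_def by (auto simp: of_int_diff of_int_add) linarith+
  have "emeasure N {a..a+1} \<le> emeasure N (({real_of_int (k-1)<..real_of_int (k-1) + 1} \<union> {real_of_int k<..real_of_int k + 1}) \<union> {real_of_int (k+1)<..real_of_int (k+1) + 1})"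
    by (rule emeasure_mono[OF sub]) (simp add: N)
  also have "\<dots> \<le> emeasure N ({real_of_int (k-1)<..real_of_int (k-1) + 1} \<union> {real_of_int k<..real_of_int k + 1}) + emeasure N {real_of_int (k+1)<..real_of_int (k+1) + 1}"
    by (rule emeasure_subadditive) (auto simp: N)
  also have "\<dots> \<le> (emeasure N {real_of_int (k-1)<..real_of_int (k-1) + 1} + emeasure N {real_of_int k<..real_of_int k + 1}) + emeasure N {real_of_int (k+1)<..real_of_int (k+1) + 1}"
    by (intro add_mono emeasure_subadditive) (auto simp: N)
  also have "\<dots> \<le> (C + C) + C" by (intro add_mono C)
  also have "\<dots> = 3 * C"
  proof - have "(3::ennreal) = 1 + 1 + 1" by simp then show ?thesis by (simp only: distrib_right mult_1) qed
  finally show ?thesis .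
qed

lemma single_le_suminf_ennreal: "(f m::ennreal) \<le> (\<Sum>n. f n)"
  using sum_le_suminf[of f "{m}"] by simp

lemma L_sum:
  fixes N :: "real measure" and \<phi> :: "real \<Rightarrow> ennreal"
  assumes N: "sets N = sets borel" and D: "\<And>a. emeasure N {a..a+1} \<le> D"
    and phi: "\<phi> \<in> borel_measurable borel" and bd: "\<And>x. \<phi> x \<le> \<beta> (nat \<lfloor>\<bar>x - c\<bar>\<rfloor>)"
  shows "(\<integral>\<^sup>+x. \<phi> x \<partial>N) \<le> 2 * D * (\<Sum>m. \<beta> m)"
proof -
  define S where "S m = {x. real m \<le> \<bar>x - c\<bar> \<and> \<bar>x - c\<bar> < real m + 1}" for m :: nat
  have Sm[measurable]: "S m \<in> sets borel" for m unfolding S_def by measurable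
  have "\<phi> x \<le> (\<Sum>m. \<beta> m * indicator (S m) x)" for x
  proof -
    let ?m = "nat \<lfloor>\<bar>x - c\<bar>\<rfloor>"
    have "x \<in> S ?m" unfolding S_def by auto
    then have "\<phi> x \<le> \<beta> ?m * indicator (S ?m) x" using bd[of x] by simp
    also have "\<dots> \<le> (\<Sum>m. \<beta> m * indicator (S m) x)" by (rule single_le_suminf_ennreal)
    finally show ?thesis .
  qed
  then have "(\<integral>\<^sup>+x. \<phi> x \<partial>N) \<le> (\<integral>\<^sup>+x. (\<Sum>m. \<beta> m * indicator (S m) x) \<partial>N)"
    by (intro nn_integral_mono) auto
  also have "\<dots> = (\<Sum>m. \<integral>\<^sup>+x. \<beta> m * indicator (S m) x \<partial>N)"
    by (rule nn_integral_suminf) (simp add: N measurable_cong_sets[OF N refl])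
  also have "\<dots> = (\<Sum>m. \<beta> m * emeasure N (S m))"
    by (intro suminf_cong nn_integral_cmult_indicator) (simp add: N)
  also have "\<dots> \<le> (\<Sum>m. \<beta> m * (2 * D))"
  proof (intro suminf_le mult_left_mono)
    fix m
    have sub: "S m \<subseteq> {c + real m .. c + real m + 1} \<union> {c - real m - 1 .. (c - real m - 1) + 1}"
      unfolding S_def by auto
    have "emeasure N (S m) \<le> emeasure N ({c + real m .. c + real m + 1} \<union> {c - real m - 1 .. (c - real m - 1) + 1})"
      by (rule emeasure_mono[OF sub]) (simp add: N)
    also have "\<dots> \<le> emeasure N {c + real m .. c + real m + 1} + emeasure N {c - real m - 1 .. (c - real m - 1) + 1}"
      by (rule emeasure_subadditive) (auto simp: N)
    also have "\<dots> \<le> D + D" by (intro add_mono D)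
    finally show "emeasure N (S m) \<le> 2 * D" by (simp add: mult_2)
  qed auto
  also have "\<dots> = 2 * D * (\<Sum>m. \<beta> m)" by (simp add: mult.commute)
  finally show ?thesis .
qed

lemma L_sum_real:
  fixes N :: "real measure" and \<phi> :: "real \<Rightarrow> real" and D :: real
  assumes N: "sets N = sets borel" and D: "\<And>a. emeasure N {a..a+1} \<le> ennreal D" and D0: "0 \<le> D"
    and phi: "\<phi> \<in> borel_measurable borel" and bd: "\<And>x. \<bar>\<phi> x\<bar> \<le> \<beta> (nat \<lfloor>\<bar>x - c\<bar>\<rfloor>)"
    and b0: "\<And>m. 0 \<le> \<beta> m" and bs: "summable \<beta>"
  shows "integrable N \<phi>" "\<bar>\<integral>x. \<phi> x \<partial>N\<bar> \<le> 2 * D * (\<Sum>m. \<beta> m)"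
proof -
  have "(\<integral>\<^sup>+x. ennreal (norm (\<phi> x)) \<partial>N) \<le> 2 * ennreal D * (\<Sum>m. ennreal (\<beta> m))"
    by (rule L_sum[OF N D, where c=c]) (auto intro!: phi measurable_compose[OF phi] ennreal_leI bd)
  also have "\<dots> = ennreal (2 * D * (\<Sum>m. \<beta> m))"
    using b0 bs D0 by (simp add: suminf_ennreal2 ennreal_mult suminf_nonneg)
  finally have I: "(\<integral>\<^sup>+x. ennreal (norm (\<phi> x)) \<partial>N) \<le> ennreal (2 * D * (\<Sum>m. \<beta> m))" .
  show int: "integrable N \<phi>"
    using I by (intro integrableI_bounded) (auto simp: measurable_cong_sets[OF N refl] phi top_unique intro: le_less_trans)
  have "ennreal (norm (\<integral>x. \<phi> x \<partial>N)) \<le> ennreal (2 * D * (\<Sum>m. \<beta> m))"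
    using integral_norm_bound_ennreal[OF int] I by (rule order_trans)
  then show "\<bar>\<integral>x. \<phi> x \<partial>N\<bar> \<le> 2 * D * (\<Sum>m. \<beta> m)"
    using b0 bs D0 by (subst (asm) ennreal_le_iff) (auto intro!: mult_nonneg_nonneg suminf_nonneg)
qed



locale etaloc =
  fixes M :: "'w measure" and \<eta> :: "'w \<Rightarrow> real"
  assumes eta: "prob_space M" "\<eta> \<in> borel_measurable M" "(\<integral>\<^sup>+ w. ennreal (\<eta> w) \<partial>M) < \<infinity>"
begin

interpretation M: prob_space M by (rule eta(1))

definition "tau s = measure M {w \<in> space M. \<eta> w > s}"

lemma tau_sets[measurable]: "{w \<in> space M. \<eta> w > s} \<in> sets M"
  using eta(2) by measurable

lemma tau_nonneg: "0 \<le> tau s" unfolding tau_def by simp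

lemma tau_le1: "tau s \<le> 1"
  unfolding tau_def using M.prob_le_1 by blast

lemma tau_mono: "s \<le> s' \<Longrightarrow> tau s' \<le> tau s"
  unfolding tau_def
  by (rule M.finite_measure_mono) auto

lemma count_bound: "(\<Sum>j. indicator {w \<in> space M. \<eta> w > real j + 1} w :: ennreal) \<le> ennreal (\<eta> w)"
proof (rule suminf_le_const)
  fix n
  have "(\<Sum>j<n. indicator {w \<in> space M. \<eta> w > real j + 1} w :: ennreal)
      \<le> (\<Sum>j<n. (if real j + 1 < \<eta> w then 1 else 0))"
    by (intro sum_mono) (auto simp: indicator_def)
  also have "\<dots> = of_nat (card {j \<in> {..<n}. real j + 1 < \<eta> w})"
    by (simp add: sum.If_cases; rule arg_cong[where f=card]; auto)
  also have "\<dots> \<le> of_nat (card {..<nat \<lfloor>\<eta> w\<rfloor>})"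
  proof (intro of_nat_mono card_mono)
    show "{j \<in> {..<n}. real j + 1 < \<eta> w} \<subseteq> {..<nat \<lfloor>\<eta> w\<rfloor>}"
      by auto linarith
  qed auto
  also have "\<dots> \<le> ennreal (\<eta> w)"
  proof (cases "\<eta> w \<ge> 0")
    case True
    then have "real (nat \<lfloor>\<eta> w\<rfloor>) \<le> \<eta> w" by linarith
    then show ?thesis using True by (simp add: ennreal_of_nat_eq_real_of_nat ennreal_leI)
  next
    case False then show ?thesis by simp
  qed
  finally show "(\<Sum>j<n. indicator {w \<in> space M. \<eta> w > real j + 1} w :: ennreal) \<le> ennreal (\<eta> w)" .
qed auto

lemma tau_summable1: "summable (\<lambda>j. tau (real j + 1))"
proof (rule summable_suminf_not_top)
  show "0 \<le> tau (real i + 1)" for i by (rule tau_nonneg)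
  have "(\<Sum>j. ennreal (tau (real j + 1))) = (\<Sum>j. emeasure M {w \<in> space M. \<eta> w > real j + 1})"
    unfolding tau_def by (intro suminf_cong) (simp add: M.emeasure_eq_measure)
  also have "\<dots> = (\<Sum>j. \<integral>\<^sup>+w. indicator {w \<in> space M. \<eta> w > real j + 1} w \<partial>M)"
    by simp
  also have "\<dots> = (\<integral>\<^sup>+w. (\<Sum>j. indicator {w \<in> space M. \<eta> w > real j + 1} w) \<partial>M)"
    by (rule nn_integral_suminf[symmetric]) simp
  also have "\<dots> \<le> (\<integral>\<^sup>+w. ennreal (\<eta> w) \<partial>M)"
    by (intro nn_integral_mono count_bound)
  also have "\<dots> < \<infinity>" by (rule eta(3))
  finally show "(\<Sum>j. ennreal (tau (real j + 1))) \<noteq> top" by simp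
qed

lemma tau_summable: "summable (\<lambda>m. tau (real m - c))"
proof -
  define N where "N = nat \<lceil>c\<rceil> + 1"
  have g: "summable (\<lambda>m. tau (real (m - N) + 1))"
    using tau_summable1 summable_iff_shift[of "\<lambda>m. tau (real (m - N) + 1)" N] by simp
  show ?thesis
  proof (rule summable_comparison_test'[OF g])
    fix m assume "N \<le> m"
    then have "real (m - N) + 1 \<le> real m - c" unfolding N_def by (simp add: of_nat_diff) linarith
    then show "norm (tau (real m - c)) \<le> tau (real (m - N) + 1)"
      using tau_mono tau_nonneg by simp
  qed
qed

end

lemma tail_split: assumes "summable b" "\<And>m. 0 \<le> b m"
  shows "(\<Sum>m. (if m < A then a else b m)) = real A * a + (\<Sum>m. b (m + A))"
proof -
  have s: "summable (\<lambda>m. (if m < A then a else b m))"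
    using assms(1) summable_iff_shift[of "\<lambda>m. (if m < A then a else b m)" A] by simp
  show ?thesis using suminf_split_initial_segment[OF s, of A] by (simp add: add.commute)
qed

lemma tail_small: assumes "summable b" "0 < (r::real)"
  shows "\<exists>N. \<forall>A\<ge>N. \<bar>\<Sum>m. b (m + A)\<bar> < r"
  using suminf_exist_split[OF assms(2,1)] by simp



lemma prob_int_bound:
  fixes f :: "'a \<Rightarrow> real"
  assumes N: "prob_space N" and f: "f \<in> borel_measurable N" and b: "\<And>x. x \<in> space N \<Longrightarrow> \<bar>f x\<bar> \<le> e"
  shows "integrable N f" "\<bar>\<integral>x. f x \<partial>N\<bar> \<le> e"
proof -
  interpret prob_space N by (rule N)
  show int: "integrable N f"
    by (rule integrable_const_bound[where B=e]) (auto simp: f b)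
  have "\<bar>\<integral>x. f x \<partial>N\<bar> \<le> (\<integral>x. \<bar>f x\<bar> \<partial>N)" by (rule integral_abs_bound)
  also have "\<dots> \<le> (\<integral>x. e \<partial>N)"
    by (rule integral_mono) (auto simp: int b)
  also have "\<dots> = e" by (simp add: prob_space)
  finally show "\<bar>\<integral>x. f x \<partial>N\<bar> \<le> e" .
qed

lemma CB:
  fixes N :: "real measure" and \<phi> :: "real \<Rightarrow> real" and D :: real
  assumes N: "sets N = sets borel" and D: "\<And>a. emeasure N {a..a+1} \<le> ennreal D" and D0: "0 \<le> D"
    and phi: "\<phi> \<in> borel_measurable borel" and B: "\<And>x. \<bar>\<phi> x\<bar> \<le> B"
    and K: "\<And>x. \<bar>x - c\<bar> \<ge> real K \<Longrightarrow> \<phi> x = 0"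
  shows "integrable N \<phi>" "\<bar>\<integral>x. \<phi> x \<partial>N\<bar> \<le> 2 * D * (real K * B)"
proof -
  have B0: "0 \<le> B" using B[of 0] by simp
  define \<beta> where "\<beta> m = (if m < K then B else 0)" for m
  have bd: "\<bar>\<phi> x\<bar> \<le> \<beta> (nat \<lfloor>\<bar>x - c\<bar>\<rfloor>)" for x
  proof (cases "nat \<lfloor>\<bar>x - c\<bar>\<rfloor> < K")
    case True then show ?thesis using B by (simp add: \<beta>_def)
  next
    case False
    then have "\<bar>x - c\<bar> \<ge> real K" by linarith
    then show ?thesis using K[of x] False by (simp add: \<beta>_def)
  qed
  have s: "(\<Sum>m. \<beta> m) = real K * B"
    using tail_split[of "\<lambda>_. 0" K B] unfolding \<beta>_def by simp
  have bs: "summable \<beta>"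
    by (rule summable_comparison_test'[where g="\<lambda>_. 0" and N=K]) (auto simp: \<beta>_def)
  show "integrable N \<phi>" "\<bar>\<integral>x. \<phi> x \<partial>N\<bar> \<le> 2 * D * (real K * B)"
    using L_sum_real[OF N D D0 phi bd _ bs] B0 s by (auto simp: \<beta>_def)
qed



locale main = mc P mu0 + etaloc M \<eta> for P mu0 and M :: "'w measure" and \<eta> +
  fixes F lam :: "real measure" and t :: "nat \<Rightarrow> real"
  assumes F: "prob_space F" "sets F = sets borel"
    and weak: "\<forall>f::real \<Rightarrow> real. continuous_on UNIV f \<and> bounded (range f) \<longrightarrow>
               ((\<lambda>x. \<integral>y. f (y - x) \<partial>(P x)) \<longlongrightarrow> (\<integral>z. f z \<partial>F)) at_top"
    and dom: "\<forall>x s. measure (P x) {y. \<bar>y - x\<bar> > s} \<le> measure M {w \<in> space M. \<eta> w > s}"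
    and Ubound: "(SUP k::int. emeasure (renewal mu0 P) {real_of_int k<..real_of_int k + 1}) < \<infinity>"
    and tlim: "filterlim t at_top sequentially"
    and lam: "sets lam = sets borel" "\<forall>K. compact K \<longrightarrow> emeasure lam K < \<infinity>"
    and vague: "\<forall>f::real \<Rightarrow> real. continuous_on UNIV f \<and> compact (closure {x. f x \<noteq> 0}) \<longrightarrow>
               (\<lambda>n. \<integral>x. f x \<partial>(shift_measure (renewal mu0 P) (t n))) \<longlonglongrightarrow> (\<integral>x. f x \<partial>lam)"
begin

abbreviation "U \<equiv> renewal mu0 P"

interpretation F: prob_space F by (rule F(1))

lemma sets_F[measurable_cong, simp]: "sets F = sets borel" by (rule F(2))

lemma DU_ex: "\<exists>DU. 0 \<le> DU \<and> (\<forall>a. emeasure U {a..a+1} \<le> ennreal DU)"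
proof -
  define C where "C = (SUP k::int. emeasure U {real_of_int k<..real_of_int k + 1})"
  have "emeasure U {a..a+1} \<le> 3 * C" for a
    by (rule unit_to_real) (auto simp: C_def intro: SUP_upper)
  moreover have "3 * C < \<infinity>" using Ubound unfolding C_def by (simp add: ennreal_mult_less_top)
  ultimately show ?thesis
    by (intro exI[of _ "enn2real (3 * C)"]) auto
qed

definition "DU = (SOME DU. 0 \<le> DU \<and> (\<forall>a. emeasure U {a..a+1} \<le> ennreal DU))"

lemma DU: "0 \<le> DU" "emeasure U {a..a+1} \<le> ennreal DU"
  using someI_ex[OF DU_ex] unfolding DU_def by auto

lemma sets_shift[simp, measurable_cong]: "sets (shift_measure N s) = sets borel"
  unfolding shift_measure_def by simp

lemma shift_meas: "(\<lambda>x. x - s) \<in> borel_measurable (U)"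
  by (simp add: measurable_cong_sets[OF sets_U refl])

lemma DU_shift: "emeasure (shift_measure U s) {a..a+1} \<le> ennreal DU"
proof -
  have "(\<lambda>x. x - s) -` {a..a+1} \<inter> space U = {a+s..(a+s)+1}" by auto
  then show ?thesis unfolding shift_measure_def
    by (subst emeasure_distr[OF shift_meas]) (auto intro: DU(2))
qed

lemma integral_shift: "(f::real\<Rightarrow>real) \<in> borel_measurable borel \<Longrightarrow>
  (\<integral>x. f x \<partial>shift_measure U s) = (\<integral>x. f (x - s) \<partial>U)"
  unfolding shift_measure_def by (intro integral_distr shift_meas)

lemma dom_tau: "measure (P x) {y. \<bar>y - x\<bar> > s} \<le> tau s"
  using dom unfolding tau_def by blast

lemma F_tail: "measure F {w. \<bar>w\<bar> > s} \<le> tau s"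
proof -
  define f where "f m w = min 1 (max 0 (real m * (\<bar>w\<bar> - s)))" for m :: nat and w :: real
  have fc: "continuous_on UNIV (f m)" for m unfolding f_def by (intro continuous_intros)
  have fm[measurable]: "f m \<in> borel_measurable borel" for m by (rule borel_measurable_continuous_onI[OF fc])
  have fb: "\<bar>f m w\<bar> \<le> 1" for m w unfolding f_def by auto
  have fbd: "bounded (range (f m))" for m
    unfolding bounded_iff using fb by auto
  have A[measurable]: "{w::real. \<bar>w\<bar> > s} \<in> sets borel" by measurable
  have le: "(\<integral>z. f m z \<partial>F) \<le> tau s" for m
  proof (rule tendsto_upperbound)
    show "((\<lambda>x. \<integral>y. f m (y - x) \<partial>(P x)) \<longlongrightarrow> (\<integral>z. f m z \<partial>F)) at_top"
      using weak fc fbd by blast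
    show "\<forall>\<^sub>F x in at_top. (\<integral>y. f m (y - x) \<partial>(P x)) \<le> tau s"
    proof (intro always_eventually allI)
      fix x
      interpret Px: prob_space "P x" by (rule prob_P)
      have "(\<integral>y. f m (y - x) \<partial>(P x)) \<le> (\<integral>y. indicator {y. \<bar>y - x\<bar> > s} y \<partial>(P x))"
      proof (rule integral_mono)
        show "integrable (P x) (\<lambda>y. f m (y - x))"
          by (rule Px.integrable_const_bound[where B=1]) (auto simp: fb measurable_cong_sets[OF sets_P refl])
        show "integrable (P x) (indicator {y. \<bar>y - x\<bar> > s} :: real \<Rightarrow> real)"
          by (rule Px.integrable_const_bound[where B=1]) (auto simp: measurable_cong_sets[OF sets_P refl])
        show "f m (y - x) \<le> indicator {y. \<bar>y - x\<bar> > s} y" for y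
          unfolding f_def by (cases "s < \<bar>y - x\<bar>") (auto simp: indicator_def mult_nonneg_nonpos)
      qed
      also have "\<dots> = measure (P x) {y. \<bar>y - x\<bar> > s}"
        by (simp add: sets_eq_imp_space_eq[OF sets_P])
      also have "\<dots> \<le> tau s" by (rule dom_tau)
      finally show "(\<integral>y. f m (y - x) \<partial>(P x)) \<le> tau s" .
    qed
  qed simp
  have lim: "(\<lambda>m. \<integral>z. f m z \<partial>F) \<longlonglongrightarrow> (\<integral>z. indicator {w. \<bar>w\<bar> > s} z \<partial>F)"
  proof (rule integral_dominated_convergence[where w="\<lambda>_. 1"])
    show "AE x in F. (\<lambda>m. f m x) \<longlonglongrightarrow> indicator {w. \<bar>w\<bar> > s} x"
    proof (intro AE_I2)
      fix x
      show "(\<lambda>m. f m x) \<longlonglongrightarrow> indicator {w. \<bar>w\<bar> > s} x"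
      proof (cases "\<bar>x\<bar> > s")
        case True
        obtain N where N: "1 / (\<bar>x\<bar> - s) < real N" using reals_Archimedean2 by blast
        have "\<forall>\<^sub>F m in sequentially. f m x = indicator {w. \<bar>w\<bar> > s} x"
        proof (rule eventually_sequentiallyI[of N])
          fix m assume "N \<le> m"
          then have "1 / (\<bar>x\<bar> - s) < real m" using N by linarith
          then have "1 \<le> real m * (\<bar>x\<bar> - s)" using True by (simp add: field_simps)
          then show "f m x = indicator {w. \<bar>w\<bar> > s} x" using True by (simp add: f_def)
        qed
        then show ?thesis by (rule tendsto_eventually)
      next
        case False
        then have "f m x = 0" for m unfolding f_def by (simp add: mult_nonneg_nonpos)
        then show ?thesis using False by simp
      qed
    qed
  qed (auto simp: fb)
  then have "measure F {w. \<bar>w\<bar> > s} \<le> tau s"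
    using le by (intro LIMSEQ_le_const2[of "\<lambda>m. \<integral>z. f m z \<partial>F"]) (auto simp: sets_eq_imp_space_eq[OF sets_F])
  then show ?thesis .
qed

end


locale gl = main +
  fixes g :: "real \<Rightarrow> real" and R G :: real
  assumes gc: "continuous_on UNIV g" and g0: "\<And>x. 0 \<le> g x" and gG: "\<And>x. g x \<le> G"
    and gR: "\<And>x. \<bar>x\<bar> > R \<Longrightarrow> g x = 0" and R0: "0 \<le> R"
begin

interpretation F: prob_space F by (rule F(1))

lemma gm[measurable]: "g \<in> borel_measurable borel" by (rule borel_measurable_continuous_onI[OF gc])

lemma G0: "0 \<le> G" using g0[of 0] gG[of 0] by simp

definition "Fg s = (\<integral>w. g (s + w) \<partial>F)"

lemma Fg_int: "integrable F (\<lambda>w. g (s + w))"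
  by (rule F.integrable_const_bound[where B=G]) (auto simp: g0 gG abs_of_nonneg)

lemma Fg0: "0 \<le> Fg s" unfolding Fg_def by (rule integral_nonneg_AE) (simp add: g0)

lemma FgG: "Fg s \<le> G"
  using prob_int_bound(2)[OF F(1), of "\<lambda>w. g (s + w)" G] g0 gG unfolding Fg_def
  by (auto simp: abs_of_nonneg)

lemma Fg_tail: "Fg s \<le> G * tau (\<bar>s\<bar> - R - 1)"
proof -
  have "Fg s \<le> (\<integral>w. G * indicator {w. \<bar>w\<bar> > \<bar>s\<bar> - R - 1} w \<partial>F)"
    unfolding Fg_def
  proof (rule integral_mono[OF Fg_int])
    show "integrable F (\<lambda>w. G * indicator {w. \<bar>w\<bar> > \<bar>s\<bar> - R - 1} w)"
      by (rule F.integrable_const_bound[where B=G]) (auto simp: G0 indicator_def)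
    fix w show "g (s + w) \<le> G * indicator {w. \<bar>w\<bar> > \<bar>s\<bar> - R - 1} w"
    proof (cases "\<bar>w\<bar> > \<bar>s\<bar> - R - 1")
      case True then show ?thesis using gG by simp
    next
      case False then have "\<bar>s + w\<bar> > R" by linarith
      then show ?thesis using gR[of "s + w"] False by simp
    qed
  qed
  also have "\<dots> = G * measure F {w. \<bar>w\<bar> > \<bar>s\<bar> - R - 1}"
    by (simp add: sets_eq_imp_space_eq[OF sets_F])
  also have "\<dots> \<le> G * tau (\<bar>s\<bar> - R - 1)"
    by (intro mult_left_mono F_tail G0)
  finally show ?thesis .
qed

lemma Fg_cont: "continuous_on UNIV Fg"
  unfolding continuous_on_eq_continuous_at[OF open_UNIV]
proof (intro ballI)
  fix s :: real
  show "isCont Fg s" unfolding continuous_at_sequentially comp_def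
  proof (intro allI impI)
    fix x :: "nat \<Rightarrow> real" assume x: "x \<longlonglongrightarrow> s"
    show "(\<lambda>n. Fg (x n)) \<longlonglongrightarrow> Fg s" unfolding Fg_def
    proof (rule integral_dominated_convergence[where w="\<lambda>_. G"])
      show "AE w in F. (\<lambda>n. g (x n + w)) \<longlonglongrightarrow> g (s + w)"
      proof (intro AE_I2)
        fix w
        have "isCont g (s + w)" using gc continuous_on_eq_continuous_at by blast
        then show "(\<lambda>n. g (x n + w)) \<longlonglongrightarrow> g (s + w)"
          using x by (intro isCont_tendsto_compose[of _ g]) (auto intro!: tendsto_intros)
      qed
    qed (auto simp: g0 gG abs_of_nonneg)
  qed
qed

lemma Fg_meas[measurable]: "Fg \<in> borel_measurable borel"
  by (rule borel_measurable_continuous_onI[OF Fg_cont])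

definition "h s y = (\<integral>z. g (z - s) \<partial>P y)"

lemma h_int: "integrable (P y) (\<lambda>z. g (z - s))"
  by (rule prob_int_bound(1)[OF prob_P, where e=G])
     (auto simp: g0 gG abs_of_nonneg measurable_cong_sets[OF sets_P refl])

lemma h0: "0 \<le> h s y" unfolding h_def by (rule integral_nonneg_AE) (simp add: g0)

lemma h_tail: "h s y \<le> G * tau (\<bar>y - s\<bar> - R - 1)"
proof -
  have "h s y \<le> (\<integral>z. G * indicator {z. \<bar>z - y\<bar> > \<bar>y - s\<bar> - R - 1} z \<partial>P y)"
    unfolding h_def
  proof (rule integral_mono[OF h_int])
    show "integrable (P y) (\<lambda>z. G * indicator {z. \<bar>z - y\<bar> > \<bar>y - s\<bar> - R - 1} z)"
      by (rule prob_int_bound(1)[OF prob_P, where e=G])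
         (auto simp: G0 indicator_def measurable_cong_sets[OF sets_P refl])
    fix z show "g (z - s) \<le> G * indicator {z. \<bar>z - y\<bar> > \<bar>y - s\<bar> - R - 1} z"
    proof (cases "\<bar>z - y\<bar> > \<bar>y - s\<bar> - R - 1")
      case True then show ?thesis using gG by simp
    next
      case False then have "\<bar>z - s\<bar> > R" by linarith
      then show ?thesis using gR[of "z - s"] False by simp
    qed
  qed
  also have "\<dots> = G * measure (P y) {z. \<bar>z - y\<bar> > \<bar>y - s\<bar> - R - 1}"
    by (simp add: sets_eq_imp_space_eq[OF sets_P])
  also have "\<dots> \<le> G * tau (\<bar>y - s\<bar> - R - 1)"
    by (intro mult_left_mono dom_tau G0)
  finally show ?thesis .
qed

lemma h_meas[measurable]: "h s \<in> borel_measurable borel"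
  unfolding h_def
  using measurable_compose[OF Psub integral_measurable_subprob_algebra[of "\<lambda>z. g (z - s)" borel]]
  by simp

end


context gl begin

lemma DUa: "\<And>a. emeasure U {a..a+1} \<le> ennreal DU" by (rule DU(2))

lemma gU_int: "integrable U (\<lambda>x. g (x - s))"
  by (rule CB(1)[OF sets_U DUa DU(1), where c=s and K="nat \<lceil>R\<rceil> + 1" and B=G])
     (auto simp: g0 gG abs_of_nonneg intro!: gR, linarith)

lemma tau_summ: "summable (\<lambda>m. G * tau (real m - (R + 1)))"
  by (intro summable_mult tau_summable)

lemma h_bd: "\<bar>h s y\<bar> \<le> G * tau (real (nat \<lfloor>\<bar>y - s\<bar>\<rfloor>) - (R + 1))"
proof -
  have "real (nat \<lfloor>\<bar>y - s\<bar>\<rfloor>) - (R + 1) \<le> \<bar>y - s\<bar> - R - 1" by linarith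
  then have "tau (\<bar>y - s\<bar> - R - 1) \<le> tau (real (nat \<lfloor>\<bar>y - s\<bar>\<rfloor>) - (R + 1))" by (rule tau_mono)
  then have "G * tau (\<bar>y - s\<bar> - R - 1) \<le> G * tau (real (nat \<lfloor>\<bar>y - s\<bar>\<rfloor>) - (R + 1))"
    using G0 mult_left_mono by blast
  then show ?thesis using h_tail[of s y] h0[of s y] by simp
qed

lemma hU_int: "integrable U (h s)"
  by (rule L_sum_real(1)[OF sets_U DUa DU(1) h_meas h_bd _ tau_summ]) (simp add: tau_nonneg G0)

lemma ren_real: "(\<integral>x. g (x - s) \<partial>U) = (\<integral>x. g (x - s) \<partial>mu0) + (\<integral>y. h s y \<partial>U)"
proof -
  have int0: "integrable mu0 (\<lambda>x. g (x - s))"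
    by (rule prob_int_bound(1)[OF init(1), where e=G])
       (auto simp: g0 gG abs_of_nonneg measurable_cong_sets[OF init(2) refl])
  have e1: "(\<integral>\<^sup>+x. ennreal (g (x - s)) \<partial>U) = ennreal (\<integral>x. g (x - s) \<partial>U)"
    by (rule nn_integral_eq_integral[OF gU_int]) (simp add: g0)
  have e2: "(\<integral>\<^sup>+x. ennreal (g (x - s)) \<partial>mu0) = ennreal (\<integral>x. g (x - s) \<partial>mu0)"
    by (rule nn_integral_eq_integral[OF int0]) (simp add: g0)
  have e3: "(\<integral>\<^sup>+x. ennreal (g (x - s)) \<partial>P y) = ennreal (h s y)" for y
    unfolding h_def by (rule nn_integral_eq_integral[OF h_int]) (simp add: g0)
  have e4: "(\<integral>\<^sup>+y. ennreal (h s y) \<partial>U) = ennreal (\<integral>y. h s y \<partial>U)"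
    by (rule nn_integral_eq_integral[OF hU_int]) (simp add: h0)
  have "ennreal (\<integral>x. g (x - s) \<partial>U) = ennreal (\<integral>x. g (x - s) \<partial>mu0) + ennreal (\<integral>y. h s y \<partial>U)"
    using renewal_eq[of "\<lambda>x. ennreal (g (x - s))"] by (simp add: e1 e2 e3 e4)
  also have "\<dots> = ennreal ((\<integral>x. g (x - s) \<partial>mu0) + (\<integral>y. h s y \<partial>U))"
    by (rule ennreal_plus[symmetric]) (auto intro!: integral_nonneg_AE simp: g0 h0)
  finally show ?thesis
    by (subst (asm) ennreal_inj) (auto intro!: integral_nonneg_AE add_nonneg_nonneg simp: g0 h0)
qed

lemma mu0_term: "(\<lambda>n. \<integral>x. g (x - t n) \<partial>mu0) \<longlonglongrightarrow> 0"
proof -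
  have "(\<lambda>n. \<integral>x. g (x - t n) \<partial>mu0) \<longlonglongrightarrow> (\<integral>x. 0 \<partial>mu0)"
  proof (rule integral_dominated_convergence[where w="\<lambda>_. G"])
    show "AE x in mu0. (\<lambda>n. g (x - t n)) \<longlonglongrightarrow> 0"
    proof (intro AE_I2 tendsto_eventually)
      fix x
      have "\<forall>\<^sub>F n in sequentially. t n \<ge> x + R + 1"
        using tlim by (simp add: filterlim_at_top)
      then show "\<forall>\<^sub>F n in sequentially. g (x - t n) = 0"
        by eventually_elim (rule gR, linarith)
    qed
    show "integrable mu0 (\<lambda>_. G)"
      using prob_space.finite_measure[OF init(1)] finite_measure.integrable_const by blast
  qed (auto simp: g0 gG abs_of_nonneg measurable_cong_sets[OF init(2) refl])
  then show ?thesis by simp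
qed

end


context gl begin

lemma g_unif: assumes "0 < e" shows "\<exists>d>0. \<forall>a b. \<bar>a - b\<bar> < d \<longrightarrow> \<bar>g a - g b\<bar> < e"
proof -
  have "uniformly_continuous_on (cball 0 (R + 1)) g"
    by (rule compact_uniformly_continuous[OF continuous_on_subset[OF gc]]) auto
  then obtain d1 where d1: "d1 > 0" "\<And>a b. a \<in> cball 0 (R+1) \<Longrightarrow> b \<in> cball 0 (R+1) \<Longrightarrow> dist b a < d1 \<Longrightarrow> dist (g b) (g a) < e"
    unfolding uniformly_continuous_on_def using assms by metis
  show ?thesis
  proof (intro exI[of _ "min d1 1"] conjI allI impI)
    show "0 < min d1 1" using d1 by simp
    fix a b :: real assume ab: "\<bar>a - b\<bar> < min d1 1"
    show "\<bar>g a - g b\<bar> < e"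
    proof (cases "\<bar>a\<bar> > R \<and> \<bar>b\<bar> > R")
      case True then show ?thesis using gR assms by simp
    next
      case False
      then have "a \<in> cball 0 (R+1)" "b \<in> cball 0 (R+1)" using ab by (auto simp: dist_real_def)
      then show ?thesis using d1(2)[of b a] ab by (simp add: dist_real_def abs_minus_commute)
    qed
  qed
qed

lemma unif: assumes e: "0 < e" and A: "0 \<le> A"
  shows "\<exists>Y. \<forall>y\<ge>Y. \<forall>s. \<bar>s\<bar> \<le> A \<longrightarrow> \<bar>(\<integral>z. g (s + (z - y)) \<partial>P y) - Fg s\<bar> \<le> 3 * e"
proof -
  obtain d where d: "d > 0" "\<And>a b. \<bar>a - b\<bar> < d \<Longrightarrow> \<bar>g a - g b\<bar> < e" using g_unif[OF e] by blast
  define K where "K = nat \<lceil>2 * A / d\<rceil>"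
  define si where "si i = - A + real i * d" for i :: nat
  have conv: "((\<lambda>x. \<integral>y. g (si i + (y - x)) \<partial>(P x)) \<longlongrightarrow> Fg (si i)) at_top" for i
  proof -
    have c: "continuous_on UNIV (\<lambda>w. g (si i + w))"
      by (intro continuous_on_compose2[OF gc]) (auto intro!: continuous_intros)
    have b: "bounded (range (\<lambda>w. g (si i + w)))"
      unfolding bounded_iff using g0 gG by (intro exI[of _ G]) (auto simp: abs_of_nonneg)
    show ?thesis using weak c b unfolding Fg_def by blast
  qed
  have "\<forall>\<^sub>F x in at_top. \<forall>i\<in>{..K}. dist (\<integral>y. g (si i + (y - x)) \<partial>(P x)) (Fg (si i)) < e"
    by (intro eventually_ball_finite ballI tendstoD[OF conv e]) auto
  then obtain Y where Y: "\<And>y i. y \<ge> Y \<Longrightarrow> i \<le> K \<Longrightarrow> \<bar>(\<integral>z. g (si i + (z - y)) \<partial>(P y)) - Fg (si i)\<bar> < e"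
    unfolding eventually_at_top_linorder dist_real_def by auto
  show ?thesis
  proof (intro exI[of _ Y] allI impI)
    fix y s assume y: "Y \<le> y" and s: "\<bar>s\<bar> \<le> A"
    define i where "i = nat \<lfloor>(s + A) / d\<rfloor>"
    have q0: "0 \<le> (s + A) / d" using s d by simp
    have iK: "i \<le> K" unfolding i_def K_def
    proof (intro nat_mono)
      have "(s + A) / d \<le> 2 * A / d" using s d by (simp add: divide_right_mono)
      then show "\<lfloor>(s + A) / d\<rfloor> \<le> \<lceil>2 * A / d\<rceil>" by linarith
    qed
    have "real i = of_int \<lfloor>(s + A) / d\<rfloor>" unfolding i_def using q0 by simp
    then have "real i \<le> (s + A) / d" "(s + A) / d < real i + 1" by linarith+
    then have "real i * d \<le> s + A" "s + A < real i * d + d" using d by (simp_all add: field_simps)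
    then have close: "\<bar>s - si i\<bar> < d" unfolding si_def by simp
    interpret Py: prob_space "P y" by (rule prob_P)
    have m1: "(\<lambda>z. g (a + (z - y))) \<in> borel_measurable (P y)" for a
      by (simp add: measurable_cong_sets[OF sets_P refl])
    have i1: "integrable (P y) (\<lambda>z. g (a + (z - y)))" for a
      by (rule prob_int_bound(1)[OF prob_P _, where e=G]) (auto simp: m1 g0 gG abs_of_nonneg)
    have d1: "\<bar>(\<integral>z. g (s + (z - y)) \<partial>P y) - (\<integral>z. g (si i + (z - y)) \<partial>P y)\<bar> \<le> e"
    proof -
      have "\<bar>(\<integral>z. g (s + (z - y)) - g (si i + (z - y)) \<partial>P y)\<bar> \<le> e"
        by (rule prob_int_bound(2)[OF prob_P]) (auto simp: measurable_cong_sets[OF sets_P refl] intro!: less_imp_le d(2) close)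
      then show ?thesis by (simp add: i1)
    qed
    have i2: "integrable F (\<lambda>w. g (a + w))" for a by (rule Fg_int)
    have d2: "\<bar>Fg (si i) - Fg s\<bar> \<le> e"
    proof -
      have "\<bar>(\<integral>w. g (si i + w) - g (s + w) \<partial>F)\<bar> \<le> e"
        by (rule prob_int_bound(2)[OF F(1)]) (auto intro!: less_imp_le d(2) simp: close abs_minus_commute)
      then show ?thesis unfolding Fg_def by (simp add: i2)
    qed
    have "\<bar>(\<integral>z. g (si i + (z - y)) \<partial>(P y)) - Fg (si i)\<bar> < e" using Y[OF y iK] .
    with d1 d2 show "\<bar>(\<integral>z. g (s + (z - y)) \<partial>P y) - Fg s\<bar> \<le> 3 * e" by linarith
  qed
qed

end


context gl begin

lemma Fg_bd: "\<bar>Fg (y - s)\<bar> \<le> G * tau (real (nat \<lfloor>\<bar>y - s\<bar>\<rfloor>) - (R + 1))"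
proof -
  have "real (nat \<lfloor>\<bar>y - s\<bar>\<rfloor>) - (R + 1) \<le> \<bar>y - s\<bar> - R - 1" by linarith
  then have "tau (\<bar>y - s\<bar> - R - 1) \<le> tau (real (nat \<lfloor>\<bar>y - s\<bar>\<rfloor>) - (R + 1))" by (rule tau_mono)
  then have "G * tau (\<bar>y - s\<bar> - R - 1) \<le> G * tau (real (nat \<lfloor>\<bar>y - s\<bar>\<rfloor>) - (R + 1))"
    using G0 mult_left_mono by blast
  then show ?thesis using Fg_tail[of "y - s"] Fg0[of "y - s"] by simp
qed

lemma FgU_int: "integrable U (\<lambda>y. Fg (y - s))"
  by (rule L_sum_real(1)[OF sets_U DUa DU(1) _ Fg_bd _ tau_summ]) (auto simp: tau_nonneg G0)

lemma claim4: "(\<lambda>n. (\<integral>y. h (t n) y \<partial>U) - (\<integral>y. Fg (y - t n) \<partial>U)) \<longlonglongrightarrow> 0"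
proof (rule LIMSEQ_I)
  fix r :: real assume r: "0 < r"
  define c0 where "c0 = 2 * DU + 1"
  have c0: "0 < c0" "2 * DU < c0" using DU(1) unfolding c0_def by auto
  define b where "b m = 2 * G * tau (real m - (R + 1))" for m :: nat
  have bs: "summable b" unfolding b_def by (intro summable_mult tau_summable)
  have b0: "0 \<le> b m" for m unfolding b_def using G0 tau_nonneg by simp
  obtain A where A: "\<bar>\<Sum>m. b (m + A)\<bar> < r / (2 * c0)"
    using tail_small[OF bs, of "r / (2 * c0)"] r c0 by auto
  define e where "e = r / (2 * c0 * 3 * (real A + 1))"
  have e: "0 < e" unfolding e_def using r c0 by simp
  obtain Y where Y: "\<And>y s. y \<ge> Y \<Longrightarrow> \<bar>s\<bar> \<le> real A \<Longrightarrow> \<bar>(\<integral>z. g (s + (z - y)) \<partial>P y) - Fg s\<bar> \<le> 3 * e"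
    using unif[OF e, of "real A"] by auto
  obtain no where no: "\<And>n. n \<ge> no \<Longrightarrow> t n \<ge> Y + real A"
    using tlim by (auto simp: filterlim_at_top eventually_sequentially)
  show "\<exists>no. \<forall>n\<ge>no. norm ((\<integral>y. h (t n) y \<partial>U) - (\<integral>y. Fg (y - t n) \<partial>U) - 0) < r"
  proof (intro exI[of _ no] allI impI)
    fix n assume n: "no \<le> n"
    define s where "s = t n"
    have sY: "s \<ge> Y + real A" using no[OF n] unfolding s_def .
    define \<beta> where "\<beta> m = (if m < A then 3 * e else b m)" for m
    have bd: "\<bar>h s y - Fg (y - s)\<bar> \<le> \<beta> (nat \<lfloor>\<bar>y - s\<bar>\<rfloor>)" for y
    proof (cases "nat \<lfloor>\<bar>y - s\<bar>\<rfloor> < A")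
      case True
      then have ys: "\<bar>y - s\<bar> < real A" by linarith
      then have "y \<ge> Y" using sY by linarith
      from Y[OF this, of "y - s"] ys
      have "\<bar>(\<integral>z. g ((y - s) + (z - y)) \<partial>P y) - Fg (y - s)\<bar> \<le> 3 * e" by simp
      then show ?thesis using True unfolding \<beta>_def h_def by simp
    next
      case False
      have "\<bar>h s y - Fg (y - s)\<bar> \<le> \<bar>h s y\<bar> + \<bar>Fg (y - s)\<bar>" by simp
      also have "\<dots> \<le> b (nat \<lfloor>\<bar>y - s\<bar>\<rfloor>)" using h_bd[of s y] Fg_bd[of y s] unfolding b_def by simp
      finally show ?thesis using False unfolding \<beta>_def by simp
    qed
    have \<beta>0: "0 \<le> \<beta> m" for m unfolding \<beta>_def using e b0 by simp
    have \<beta>s: "summable \<beta>"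
    proof -
      have "summable (\<lambda>m. \<beta> (m + A))" unfolding \<beta>_def using bs by simp
      then show ?thesis by simp
    qed
    have sum\<beta>: "(\<Sum>m. \<beta> m) = real A * (3 * e) + (\<Sum>m. b (m + A))"
      unfolding \<beta>_def by (rule tail_split[OF bs b0])
    have int: "integrable U (\<lambda>y. h s y - Fg (y - s))"
      using Bochner_Integration.integrable_diff[OF hU_int[of s] FgU_int[of s]] by simp
    have "\<bar>\<integral>y. h s y - Fg (y - s) \<partial>U\<bar> \<le> 2 * DU * (\<Sum>m. \<beta> m)"
      by (rule L_sum_real(2)[OF sets_U DUa DU(1) _ bd \<beta>0 \<beta>s]) simp
    also have "\<dots> = 2 * DU * (real A * (3 * e)) + 2 * DU * (\<Sum>m. b (m + A))"
      by (simp add: sum\<beta> algebra_simps)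
    also have "\<dots> < r / 2 + r / 2"
    proof (rule add_le_less_mono)
      have "2 * DU * (real A * (3 * e)) \<le> c0 * (real A * (3 * e))"
        using c0 e by (intro mult_right_mono) auto
      also have "\<dots> = r / 2 * (real A / (real A + 1))"
      proof -
        have a1: "real A + 1 > 0" by simp
        have "c0 * (real A * (3 * (r / (2 * c0 * 3 * (real A + 1))))) = (c0 * 3) * (real A * r) / ((c0 * 3) * (2 * (real A + 1)))"
          by (simp add: algebra_simps)
        also have "\<dots> = (real A * r) / (2 * (real A + 1))" using c0(1) a1 by (subst mult_divide_mult_cancel_left) auto
        also have "\<dots> = r / 2 * (real A / (real A + 1))" by simp
        finally show ?thesis unfolding e_def .
      qed
      also have "\<dots> \<le> r / 2" using r by (intro mult_left_le) auto
      finally show "2 * DU * (real A * (3 * e)) \<le> r / 2" .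
      have s0: "0 \<le> (\<Sum>m. b (m + A))" using bs b0 by (intro suminf_nonneg) auto
      have "2 * DU * (\<Sum>m. b (m + A)) \<le> c0 * (\<Sum>m. b (m + A))"
        using c0 s0 by (intro mult_right_mono) auto
      also have "\<dots> < c0 * (r / (2 * c0))" using A s0 c0 by (intro mult_strict_left_mono) auto
      also have "\<dots> = r / 2" using c0 by simp
      finally show "2 * DU * (\<Sum>m. b (m + A)) < r / 2" .
    qed
    finally show "norm ((\<integral>y. h (t n) y \<partial>U) - (\<integral>y. Fg (y - t n) \<partial>U) - 0) < r"
      using int by (simp add: s_def[symmetric] hU_int FgU_int)
  qed
qed

end


context main begin

lemma cc_of_bounded: "{x::real. f x \<noteq> 0} \<subseteq> {a..b} \<Longrightarrow> compact (closure {x. f x \<noteq> 0})"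
  by (simp add: bounded_subset[OF bounded_closed_interval])

lemma sets_lam[measurable_cong, simp]: "sets lam = sets borel" by (rule lam(1))

lemma lam_int_cc: assumes f: "f \<in> borel_measurable borel" and B: "\<And>x. \<bar>f x\<bar> \<le> B"
  and z: "\<And>x. x \<notin> {a..b} \<Longrightarrow> (f x::real) = 0"
  shows "integrable lam f"
proof (rule integrableI_bounded)
  show "f \<in> borel_measurable lam" using f by (simp add: measurable_cong_sets[OF lam(1) refl])
  have "(\<integral>\<^sup>+x. ennreal (norm (f x)) \<partial>lam) \<le> (\<integral>\<^sup>+x. ennreal B * indicator {a..b} x \<partial>lam)"
    by (intro nn_integral_mono) (auto simp: B z indicator_def ennreal_leI)
  also have "\<dots> = ennreal B * emeasure lam {a..b}"
    by (rule nn_integral_cmult_indicator) simp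
  also have "\<dots> < \<infinity>" using lam(2) by (simp add: ennreal_mult_less_top)
  finally show "(\<integral>\<^sup>+x. ennreal (norm (f x)) \<partial>lam) < \<infinity>" .
qed

lemma lam_unit: "emeasure lam {a..a+1} \<le> ennreal (4 * DU)"
proof -
  define f where "f x = min 1 (max 0 (min (x - (a - 1)) ((a + 2) - x)))" for x
  have fc: "continuous_on UNIV f" unfolding f_def by (intro continuous_intros)
  have fm[measurable]: "f \<in> borel_measurable borel" by (rule borel_measurable_continuous_onI[OF fc])
  have fz: "x \<notin> {a - 1..a + 2} \<Longrightarrow> f x = 0" for x unfolding f_def by auto
  have fb: "\<bar>f x\<bar> \<le> 1" for x unfolding f_def by auto
  have f0: "0 \<le> f x" for x unfolding f_def by auto
  have cc: "compact (closure {x. f x \<noteq> 0})" by (rule cc_of_bounded) (use fz in blast)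
  have lim: "(\<lambda>n. \<integral>x. f x \<partial>(shift_measure U (t n))) \<longlonglongrightarrow> (\<integral>x. f x \<partial>lam)"
    using vague fc cc by blast
  have bd: "(\<integral>x. f x \<partial>(shift_measure U s)) \<le> 4 * DU" for s
  proof -
    have "\<bar>\<integral>x. f x \<partial>(shift_measure U s)\<bar> \<le> 2 * DU * (real 2 * 1)"
      by (rule CB(2)[OF sets_shift DU_shift DU(1) fm fb, where c="a + 1/2"]) (rule fz, auto)
    then show ?thesis by simp
  qed
  have I: "(\<integral>x. f x \<partial>lam) \<le> 4 * DU"
    using lim bd by (intro LIMSEQ_le_const2[of "\<lambda>n. \<integral>x. f x \<partial>(shift_measure U (t n))"]) auto
  have int: "integrable lam f" by (rule lam_int_cc[OF fm fb fz])
  have "emeasure lam {a..a+1} = (\<integral>\<^sup>+x. indicator {a..a+1} x \<partial>lam)" by simp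
  also have "\<dots> \<le> (\<integral>\<^sup>+x. ennreal (f x) \<partial>lam)"
    by (intro nn_integral_mono) (auto simp: indicator_def f_def)
  also have "\<dots> = ennreal (\<integral>x. f x \<partial>lam)" by (rule nn_integral_eq_integral[OF int]) (simp add: f0)
  also have "\<dots> \<le> ennreal (4 * DU)" using I by (rule ennreal_leI)
  finally show ?thesis .
qed

end

context gl begin

lemma tail_bound:
  assumes N: "sets N = sets borel" and D: "\<And>a. emeasure N {a..a+1} \<le> ennreal D" and D0: "0 \<le> D"
  shows "integrable N Fg"
    "\<bar>(\<integral>x. Fg x \<partial>N) - (\<integral>x. Fg x * min 1 (max 0 (real A + 1 - \<bar>x\<bar>)) \<partial>N)\<bar>
       \<le> 2 * D * (\<Sum>m. G * tau (real (m + A) - (R + 1)))"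
proof -
  define \<psi> where "\<psi> x = min 1 (max 0 (real A + 1 - \<bar>x\<bar>))" for x
  have Fgb: "\<bar>Fg x\<bar> \<le> G * tau (real (nat \<lfloor>\<bar>x - 0\<bar>\<rfloor>) - (R + 1))" for x
    using Fg_bd[of x 0] by simp
  show int1: "integrable N Fg"
    by (rule L_sum_real(1)[OF N D D0 _ Fgb _ tau_summ]) (auto simp: tau_nonneg G0)
  define b where "b m = G * tau (real m - (R + 1))" for m :: nat
  have bs: "summable b" unfolding b_def by (rule tau_summ)
  have b0: "0 \<le> b m" for m unfolding b_def using G0 tau_nonneg by simp
  define \<beta> where "\<beta> m = (if m < A then 0 else b m)" for m
  have \<psi>m: "\<psi> \<in> borel_measurable borel" unfolding \<psi>_def by measurable
  have bd: "\<bar>Fg x - Fg x * \<psi> x\<bar> \<le> \<beta> (nat \<lfloor>\<bar>x - 0\<bar>\<rfloor>)" for x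
  proof (cases "nat \<lfloor>\<bar>x\<bar>\<rfloor> < A")
    case True then have "\<bar>x\<bar> < real A" by linarith
    then have "\<psi> x = 1" unfolding \<psi>_def by simp
    then show ?thesis unfolding \<beta>_def using True by simp
  next
    case False
    have p: "0 \<le> \<psi> x" "\<psi> x \<le> 1" unfolding \<psi>_def by auto
    have e1: "Fg x - Fg x * \<psi> x = Fg x * (1 - \<psi> x)" by (simp add: algebra_simps)
    have "\<bar>Fg x - Fg x * \<psi> x\<bar> = \<bar>Fg x\<bar> * (1 - \<psi> x)" unfolding e1 using p by (simp add: abs_mult)
    also have "\<dots> \<le> \<bar>Fg x\<bar>" using p by (simp add: mult_left_le)
    also have "\<dots> \<le> b (nat \<lfloor>\<bar>x - 0\<bar>\<rfloor>)" using Fgb[of x] unfolding b_def by simp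
    finally show ?thesis unfolding \<beta>_def using False by simp
  qed
  have \<beta>0: "0 \<le> \<beta> m" for m unfolding \<beta>_def using b0 by simp
  have \<beta>s: "summable \<beta>"
  proof -
    have "summable (\<lambda>m. \<beta> (m + A))" unfolding \<beta>_def using bs by simp
    then show ?thesis by simp
  qed
  have sum\<beta>: "(\<Sum>m. \<beta> m) = (\<Sum>m. b (m + A))"
    unfolding \<beta>_def using tail_split[OF bs b0, of A 0] by simp
  have int2: "integrable N (\<lambda>x. Fg x * \<psi> x)"
  proof -
    have "\<bar>Fg x * \<psi> x\<bar> \<le> G * tau (real (nat \<lfloor>\<bar>x - 0\<bar>\<rfloor>) - (R + 1))" for x
    proof -
      have "\<bar>Fg x * \<psi> x\<bar> \<le> \<bar>Fg x\<bar>" unfolding \<psi>_def by (auto simp: abs_mult intro: mult_left_le)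
      then show ?thesis using Fgb[of x] by linarith
    qed
    note bb = this
    have m: "(\<lambda>x. Fg x * \<psi> x) \<in> borel_measurable borel" using \<psi>m by measurable
    show ?thesis
      by (rule L_sum_real(1)[OF N D D0 m bb _ tau_summ]) (auto simp: tau_nonneg G0)
  qed
  have "\<bar>\<integral>x. Fg x - Fg x * \<psi> x \<partial>N\<bar> \<le> 2 * D * (\<Sum>m. \<beta> m)"
    by (rule L_sum_real(2)[OF N D D0 _ bd \<beta>0 \<beta>s]) (use \<psi>m in measurable)
  then show "\<bar>(\<integral>x. Fg x \<partial>N) - (\<integral>x. Fg x * min 1 (max 0 (real A + 1 - \<bar>x\<bar>)) \<partial>N)\<bar>
       \<le> 2 * D * (\<Sum>m. G * tau (real (m + A) - (R + 1)))"
    using Bochner_Integration.integral_diff[OF int1 int2] unfolding sum\<beta> b_def \<psi>_def by simp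
qed

end


lemma tri3: "\<bar>a - b\<bar> < e \<Longrightarrow> \<bar>c - d\<bar> < e \<Longrightarrow> \<bar>b - d\<bar> < e \<Longrightarrow> \<bar>a - c\<bar> < 3 * (e::real)"
  by (simp add: abs_less_iff)

context gl begin

lemma claim5: "(\<lambda>n. \<integral>x. Fg x \<partial>shift_measure U (t n)) \<longlonglongrightarrow> (\<integral>x. Fg x \<partial>lam)"
proof (rule LIMSEQ_I)
  fix r :: real assume r: "0 < r"
  define c1 where "c1 = 8 * DU + 1"
  have c1: "0 < c1" "2 * DU \<le> c1" "2 * (4 * DU) \<le> c1" using DU(1) unfolding c1_def by auto
  define b where "b m = G * tau (real m - (R + 1))" for m :: nat
  have bs: "summable b" unfolding b_def by (rule tau_summ)
  have b0: "0 \<le> b m" for m unfolding b_def using G0 tau_nonneg by simp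
  obtain A where A: "\<bar>\<Sum>m. b (m + A)\<bar> < r / (3 * c1)"
    using tail_small[OF bs, of "r / (3 * c1)"] r c1 by auto
  have s0: "0 \<le> (\<Sum>m. b (m + A))" using bs b0 by (intro suminf_nonneg) auto
  have small: "D' * (\<Sum>m. b (m + A)) < r / 3" if "D' \<le> c1" "0 \<le> D'" for D'
  proof -
    have "D' * (\<Sum>m. b (m + A)) \<le> c1 * (\<Sum>m. b (m + A))" using that s0 by (intro mult_right_mono)
    also have "\<dots> < c1 * (r / (3 * c1))" using A s0 c1 by (intro mult_strict_left_mono) auto
    also have "\<dots> = r / 3" using c1 by simp
    finally show ?thesis .
  qed
  define \<psi> where "\<psi> x = min 1 (max 0 (real A + 1 - \<bar>x\<bar>))" for x
  define f where "f x = Fg x * \<psi> x" for x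
  have fc: "continuous_on UNIV f" unfolding f_def \<psi>_def
    by (intro continuous_intros Fg_cont)
  have cc: "compact (closure {x. f x \<noteq> 0})"
    by (rule cc_of_bounded[where a="- (real A + 1)" and b="real A + 1"]) (auto simp: f_def \<psi>_def)
  have "(\<lambda>n. \<integral>x. f x \<partial>(shift_measure U (t n))) \<longlonglongrightarrow> (\<integral>x. f x \<partial>lam)"
    using vague fc cc by blast
  then obtain no where no: "\<And>n. n \<ge> no \<Longrightarrow> \<bar>(\<integral>x. f x \<partial>(shift_measure U (t n))) - (\<integral>x. f x \<partial>lam)\<bar> < r / 3"
    using r unfolding LIMSEQ_def dist_real_def by (metis zero_less_divide_iff zero_less_numeral)
  have tl: "\<bar>(\<integral>x. Fg x \<partial>lam) - (\<integral>x. f x \<partial>lam)\<bar> < r / 3"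
  proof -
    have "\<bar>(\<integral>x. Fg x \<partial>lam) - (\<integral>x. f x \<partial>lam)\<bar> \<le> 2 * (4 * DU) * (\<Sum>m. b (m + A))"
      using tail_bound(2)[OF sets_lam lam_unit, of A] DU(1) unfolding f_def \<psi>_def b_def by simp
    also have "\<dots> < r / 3" using small[of "2 * (4 * DU)"] c1 DU(1) by simp
    finally show ?thesis .
  qed
  show "\<exists>no. \<forall>n\<ge>no. norm ((\<integral>x. Fg x \<partial>shift_measure U (t n)) - (\<integral>x. Fg x \<partial>lam)) < r"
  proof (intro exI[of _ no] allI impI)
    fix n assume n: "no \<le> n"
    have tu: "\<bar>(\<integral>x. Fg x \<partial>shift_measure U (t n)) - (\<integral>x. f x \<partial>shift_measure U (t n))\<bar> < r / 3"
    proof -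
      have "\<bar>(\<integral>x. Fg x \<partial>shift_measure U (t n)) - (\<integral>x. f x \<partial>shift_measure U (t n))\<bar> \<le> 2 * DU * (\<Sum>m. b (m + A))"
        using tail_bound(2)[OF sets_shift DU_shift[of "t n"] DU(1), of A] unfolding f_def \<psi>_def b_def by simp
      also have "\<dots> < r / 3" using small[of "2 * DU"] c1 DU(1) by simp
      finally show ?thesis .
    qed
    show "norm ((\<integral>x. Fg x \<partial>shift_measure U (t n)) - (\<integral>x. Fg x \<partial>lam)) < r"
      using tri3[OF tu tl no[OF n]] by simp
  qed
qed

lemma final_g: "(\<integral>x. g x \<partial>lam) = (\<integral>x. Fg x \<partial>lam)"
proof -
  have cc: "compact (closure {x. g x \<noteq> 0})"
  proof (rule cc_of_bounded[where a="- R" and b="R"])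
    show "{x. g x \<noteq> 0} \<subseteq> {- R..R}"
    proof
      fix x assume "x \<in> {x. g x \<noteq> 0}"
      then have "\<not> \<bar>x\<bar> > R" using gR by auto
      then show "x \<in> {- R..R}" by auto
    qed
  qed
  have l1: "(\<lambda>n. \<integral>x. g x \<partial>(shift_measure U (t n))) \<longlonglongrightarrow> (\<integral>x. g x \<partial>lam)"
    using vague gc cc by blast
  have eq: "(\<integral>x. g x \<partial>(shift_measure U (t n))) =
     (\<integral>x. g (x - t n) \<partial>mu0) + ((\<integral>y. h (t n) y \<partial>U) - (\<integral>y. Fg (y - t n) \<partial>U)) + (\<integral>x. Fg x \<partial>shift_measure U (t n))" for n
    using ren_real[of "t n"] integral_shift[OF gm, of "t n"] integral_shift[OF Fg_meas, of "t n"] by simp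
  have l2: "(\<lambda>n. \<integral>x. g x \<partial>(shift_measure U (t n))) \<longlonglongrightarrow> 0 + 0 + (\<integral>x. Fg x \<partial>lam)"
    unfolding eq by (intro tendsto_add mu0_term claim4 claim5)
  show ?thesis using LIMSEQ_unique[OF l1 l2] by simp
qed

end


context main begin

interpretation F: prob_space F by (rule F(1))

definition "nu = distr (lam \<Otimes>\<^sub>M F) borel (\<lambda>(y, w). y + w)"

lemma add_meas: "(\<lambda>(y, w). y + w) \<in> (lam \<Otimes>\<^sub>M F) \<rightarrow>\<^sub>M (borel :: real measure)"
  by measurable

lemma sets_nu[simp]: "sets nu = sets borel" unfolding nu_def by simp

lemma nu_emeasure: assumes B: "B \<in> sets borel" shows "emeasure nu B = conv_meas lam F B"
proof -
  let ?X = "(\<lambda>(y, w). y + w) -` B \<inter> space (lam \<Otimes>\<^sub>M F)"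
  have X: "?X \<in> sets (lam \<Otimes>\<^sub>M F)" using add_meas B by (rule measurable_sets)
  have "emeasure nu B = emeasure (lam \<Otimes>\<^sub>M F) ?X" unfolding nu_def
    by (rule emeasure_distr[OF add_meas B])
  also have "\<dots> = (\<integral>\<^sup>+y. emeasure F (Pair y -` ?X) \<partial>lam)"
    by (rule F.emeasure_pair_measure_alt[OF X])
  also have "\<dots> = conv_meas lam F B" unfolding conv_meas_def
  proof (intro nn_integral_cong arg_cong[where f="emeasure F"])
    fix y
    have sp: "space (lam \<Otimes>\<^sub>M F) = UNIV"
      by (simp add: space_pair_measure sets_eq_imp_space_eq[OF sets_lam] sets_eq_imp_space_eq[OF sets_F])
    show "Pair y -` ?X = (\<lambda>b. b - y) ` B"
      unfolding sp
    proof (auto)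
      fix w assume "y + w \<in> B" then show "w \<in> (\<lambda>b. b - y) ` B" by (intro rev_image_eqI[of "y + w"]) auto
    qed
  qed
  finally show ?thesis .
qed

definition "gm a b m x = min 1 (real (Suc m) * max 0 (min (x - a) (b - x)))"

lemma gm_gl: "gl P mu0 M \<eta> F lam t (gm a b m) (max \<bar>a\<bar> \<bar>b\<bar>) 1"
proof (rule gl.intro[OF main_axioms], unfold_locales)
  show "continuous_on UNIV (gm a b m)" unfolding gm_def by (intro continuous_intros)
  show "0 \<le> gm a b m x" for x unfolding gm_def by auto
  show "gm a b m x \<le> 1" for x unfolding gm_def by auto
  show "0 \<le> max \<bar>a\<bar> \<bar>b\<bar>" by simp
  fix x assume "max \<bar>a\<bar> \<bar>b\<bar> < \<bar>x\<bar>"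
  then have "min (x - a) (b - x) \<le> 0" by auto
  then show "gm a b m x = 0" unfolding gm_def by simp
qed

lemma gm_mono: "m \<le> n \<Longrightarrow> gm a b m x \<le> gm a b n x"
  unfolding gm_def by (intro min.mono order_refl mult_right_mono) auto

lemma gm_inc: "incseq (\<lambda>m. ennreal (gm a b m x))"
  unfolding incseq_def by (auto intro!: ennreal_leI gm_mono)

lemma gm_sup: "(SUP m. ennreal (gm a b m x)) = indicator {a<..<b} x"
proof (cases "a < x \<and> x < b")
  case True
  define d where "d = min (x - a) (b - x)"
  have d: "0 < d" using True unfolding d_def by simp
  obtain N where N: "1 / d < real N" using reals_Archimedean2 by blast
  have "1 \<le> real (Suc N) * d" using N d by (simp add: field_simps)
  then have gN: "gm a b N x = 1" unfolding gm_def d_def[symmetric] using d by simp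
  have "(SUP m. ennreal (gm a b m x)) = 1"
  proof (rule antisym)
    show "(SUP m. ennreal (gm a b m x)) \<le> 1"
      by (rule SUP_least) (auto simp: gm_def)
    show "1 \<le> (SUP m. ennreal (gm a b m x))"
      using SUP_upper[of N UNIV "\<lambda>m. ennreal (gm a b m x)"] gN by simp
  qed
  then show ?thesis using True by simp
next
  case False
  then have "min (x - a) (b - x) \<le> 0" by auto
  then have "gm a b m x = 0" for m unfolding gm_def by simp
  then show ?thesis using False by simp
qed

lemma eq_open: "emeasure lam {a<..<b} = emeasure nu {a<..<b}"
proof -
  define Fgm where "Fgm m s = (\<integral>w. gm a b m (s + w) \<partial>F)" for m s
  have Fgm: "Fgm m = gl.Fg F (gm a b m)" for m unfolding Fgm_def
    using gl.Fg_def[OF gm_gl, of a b m] by (simp add: fun_eq_iff)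
  have gmm[measurable]: "gm a b m \<in> borel_measurable borel" for m using gl.gm[OF gm_gl] .
  have Fgmm[measurable]: "Fgm m \<in> borel_measurable borel" for m using gl.Fg_meas[OF gm_gl] Fgm by simp
  have inner: "(\<integral>\<^sup>+w. ennreal (gm a b m (y + w)) \<partial>F) = ennreal (Fgm m y)" for m y
    unfolding Fgm_def using gl.Fg_int[OF gm_gl] gl.g0[OF gm_gl]
    by (intro nn_integral_eq_integral) auto
  have key: "(\<integral>\<^sup>+x. ennreal (gm a b m x) \<partial>lam) = (\<integral>\<^sup>+y. ennreal (Fgm m y) \<partial>lam)" for m
  proof -
    have i1: "integrable lam (gm a b m)"
      by (rule lam_int_cc[OF gmm, where B=1 and a="- max \<bar>a\<bar> \<bar>b\<bar>" and b="max \<bar>a\<bar> \<bar>b\<bar>"])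
         (auto simp: gl.g0[OF gm_gl] gl.gG[OF gm_gl] abs_of_nonneg intro!: gl.gR[OF gm_gl])
    have i2: "integrable lam (Fgm m)"
      using gl.tail_bound(1)[OF gm_gl sets_lam lam_unit] DU(1) Fgm by simp
    have "(\<integral>\<^sup>+x. ennreal (gm a b m x) \<partial>lam) = ennreal (\<integral>x. gm a b m x \<partial>lam)"
      by (rule nn_integral_eq_integral[OF i1]) (simp add: gl.g0[OF gm_gl])
    also have "(\<integral>x. gm a b m x \<partial>lam) = (\<integral>y. Fgm m y \<partial>lam)"
      using gl.final_g[OF gm_gl] Fgm by simp
    also have "ennreal \<dots> = (\<integral>\<^sup>+y. ennreal (Fgm m y) \<partial>lam)"
      by (rule nn_integral_eq_integral[OF i2, symmetric]) (simp add: gl.Fg0[OF gm_gl] Fgm)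
    finally show ?thesis .
  qed
  have "emeasure lam {a<..<b} = (\<integral>\<^sup>+x. indicator {a<..<b} x \<partial>lam)" by simp
  also have "\<dots> = (\<integral>\<^sup>+x. (SUP m. ennreal (gm a b m x)) \<partial>lam)" by (simp add: gm_sup)
  also have "\<dots> = (SUP m. \<integral>\<^sup>+x. ennreal (gm a b m x) \<partial>lam)"
    by (rule nn_integral_monotone_convergence_SUP) (auto simp: incseq_def le_fun_def intro!: ennreal_leI gm_mono)
  also have "\<dots> = (SUP m. \<integral>\<^sup>+y. (\<integral>\<^sup>+w. ennreal (gm a b m (y + w)) \<partial>F) \<partial>lam)"
    by (simp add: key inner)
  also have "\<dots> = (\<integral>\<^sup>+y. (SUP m. \<integral>\<^sup>+w. ennreal (gm a b m (y + w)) \<partial>F) \<partial>lam)"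
  proof (rule nn_integral_monotone_convergence_SUP[symmetric])
    show "incseq (\<lambda>m y. \<integral>\<^sup>+w. ennreal (gm a b m (y + w)) \<partial>F)"
      unfolding incseq_def le_fun_def by (auto intro!: nn_integral_mono ennreal_leI gm_mono)
    show "(\<lambda>y. \<integral>\<^sup>+w. ennreal (gm a b m (y + w)) \<partial>F) \<in> borel_measurable lam" for m
      unfolding inner by measurable
  qed
  also have "\<dots> = (\<integral>\<^sup>+y. (\<integral>\<^sup>+w. indicator {a<..<b} (y + w) \<partial>F) \<partial>lam)"
  proof (intro nn_integral_cong)
    fix y
    have "(SUP m. \<integral>\<^sup>+w. ennreal (gm a b m (y + w)) \<partial>F) = (\<integral>\<^sup>+w. (SUP m. ennreal (gm a b m (y + w))) \<partial>F)"
      by (rule nn_integral_monotone_convergence_SUP[symmetric]) (auto simp: incseq_def le_fun_def intro!: ennreal_leI gm_mono)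
    then show "(SUP m. \<integral>\<^sup>+w. ennreal (gm a b m (y + w)) \<partial>F) = (\<integral>\<^sup>+w. indicator {a<..<b} (y + w) \<partial>F)"
      by (simp add: gm_sup)
  qed
  also have "\<dots> = conv_meas lam F {a<..<b}" unfolding conv_meas_def
  proof (intro nn_integral_cong)
    fix y
    have "(\<lambda>b. b - y) ` {a<..<b} = {w. y + w \<in> {a<..<b}}"
      by (auto intro: rev_image_eqI[of "y + _"])
    moreover have "(\<lambda>w. indicator {a<..<b} (y + w) :: ennreal) = indicator {w. y + w \<in> {a<..<b}}"
      by (auto simp: indicator_def)
    moreover have "{w. y + w \<in> {a<..<b}} \<in> sets F" by simp
    ultimately show "(\<integral>\<^sup>+w. indicator {a<..<b} (y + w) \<partial>F) = emeasure F ((\<lambda>b. b - y) ` {a<..<b})"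
      by simp
  qed
  also have "\<dots> = emeasure nu {a<..<b}" by (rule nu_emeasure[symmetric]) simp
  finally show ?thesis .
qed

lemma lam_eq_nu: "lam = nu"
proof (rule measure_eqI_generator_eq[where \<Omega>=UNIV and E="range (\<lambda>(a, b). box a b)" and A="\<lambda>i. box (- real i) (real i)"])
  show "Int_stable (range (\<lambda>(a, b). box a (b::real)))"
  proof (rule Int_stableI)
    fix X Y assume "X \<in> range (\<lambda>(a, b). box a (b::real))" "Y \<in> range (\<lambda>(a, b). box a (b::real))"
    then obtain a b c d where "X = {a<..<b}" "Y = {c<..<d}" by auto
    then have "X \<inter> Y = box (max a c) (min b d)" by auto
    then show "X \<inter> Y \<in> range (\<lambda>(a, b). box a b)" by auto
  qed
  show "range (\<lambda>(a, b). box a (b::real)) \<subseteq> Pow UNIV" by simp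
  fix X assume "X \<in> range (\<lambda>(a, b). box a (b::real))"
  then obtain a b where "X = {a<..<b}" by auto
  then show "emeasure lam X = emeasure nu X" using eq_open by simp
next
  have "sets (borel :: real measure) = sigma_sets UNIV (range (\<lambda>(a, b). box a b))"
    by (subst borel_eq_box) (simp add: sets_measure_of)
  then show "sets lam = sigma_sets UNIV (range (\<lambda>(a, b). box a b))"
    "sets nu = sigma_sets UNIV (range (\<lambda>(a, b). box a b))" by simp_all
  show "range (\<lambda>i. box (- real i) (real i)) \<subseteq> range (\<lambda>(a, b). box a b)" by auto
  show "(\<Union>i. box (- real i) (real i)) = (UNIV :: real set)"
  proof -
    have "x \<in> box (- real (nat \<lceil>\<bar>x\<bar>\<rceil> + 1)) (real (nat \<lceil>\<bar>x\<bar>\<rceil> + 1))" for x :: real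
      by (auto simp: box_real) linarith+
    then show ?thesis by blast
  qed
  fix i :: nat
  have "emeasure lam (box (- real i) (real i)) \<le> emeasure lam {- real i..real i}"
    by (intro emeasure_mono) (auto simp: box_real)
  also have "\<dots> < \<infinity>" using lam(2) by simp
  finally show "emeasure lam (box (- real i) (real i)) \<noteq> \<infinity>" by simp
qed

end

theorem lemma1:
  fixes P :: "real \<Rightarrow> real measure" and mu0 F lam :: "real measure"
    and M :: "'w measure" and \<eta> :: "'w \<Rightarrow> real" and t :: "nat \<Rightarrow> real"
  assumes kernel: "P \<in> borel \<rightarrow>\<^sub>M prob_algebra borel"
    and init: "prob_space mu0" "sets mu0 = sets borel"
    and green: "\<forall>k::int. (SUP y. \<Sum>n. emeasure (kpow P n y) {real_of_int k<..real_of_int k + 1}) < \<infinity>"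
    and F: "prob_space F" "sets F = sets borel"
    and weak: "\<forall>f::real \<Rightarrow> real. continuous_on UNIV f \<and> bounded (range f) \<longrightarrow>
               ((\<lambda>x. \<integral>y. f (y - x) \<partial>(P x)) \<longlongrightarrow> (\<integral>z. f z \<partial>F)) at_top"
    and eta: "prob_space M" "\<eta> \<in> borel_measurable M" "(\<integral>\<^sup>+ w. ennreal (\<eta> w) \<partial>M) < \<infinity>"
    and dom: "\<forall>x s. measure (P x) {y. \<bar>y - x\<bar> > s} \<le> measure M {w \<in> space M. \<eta> w > s}"
    and Ubound: "(SUP k::int. emeasure (renewal mu0 P) {real_of_int k<..real_of_int k + 1}) < \<infinity>"
    and tlim: "filterlim t at_top sequentially"
    and lam: "sets lam = sets borel" "\<forall>K. compact K \<longrightarrow> emeasure lam K < \<infinity>"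
    and vague: "\<forall>f::real \<Rightarrow> real. continuous_on UNIV f \<and> compact (closure {x. f x \<noteq> 0}) \<longrightarrow>
               (\<lambda>n. \<integral>x. f x \<partial>(shift_measure (renewal mu0 P) (t n))) \<longlonglongrightarrow> (\<integral>x. f x \<partial>lam)"
  shows "\<forall>B \<in> sets borel. emeasure lam B = conv_meas lam F B"
proof -
  interpret m: main P mu0 M \<eta> F lam t
    by (rule main.intro, (rule mc.intro; fact), (rule etaloc.intro; fact), (rule main_axioms.intro; fact))
  show ?thesis using m.lam_eq_nu m.nu_emeasure by simp
qed

end
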